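(* Consider ${\rm CHC}_R(\mathbf k,\mathbf n,\lambda)$ under regime (A1), and let $$(\hat I_1,\dots,\hat I_d)\in\arg\max_{I_i\subseteq[n_i],\,|I_i|=k_i}\ \sum_{i_1\in I_1}\cdots\sum_{i_d\in I_d}\mathcal Y_{[i_1,\dots,i_d]}.$$ There exists $C_0>0$ (depending only on $d$) such that if $$\lambda\ge C_0\sqrt{\frac{\sum_{i=1}^d\log(n_i-k_i)}{\min_{1\le i\le d}\prod_{z\ne i}k_z}},$$ then $(\hat I_1,\dots,\hat I_d)=S(\mathcal X)$ with probability at least $1-C\sum_{i=1}^d(n_i-k_i)^{-c}$ for some constants $c,C>0$, uniformly over $\mathcal X\in\mathscr X_{\rm CHC}(\mathbf k,\mathbf n,\lambda)$. Moreover, under regime (A2), this estimator achieves reliable recovery (risk $\to0$) whenever $\beta<(d-1)\alpha/2$.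
   Context: Model: $\mathcal Y=\mathcal X+\mathcal Z\in\mathbb R^{n_1\times\cdots\times n_d}$, $\mathcal Z$ with i.i.d. $N(0,1)$ entries. $\mathscr X_{\rm CHC}(\mathbf k,\mathbf n,\lambda)=\{\lambda'\mathbf 1_{I_1}\circ\cdots\circ\mathbf 1_{I_d}: I_i\subseteq[n_i],|I_i|=k_i,\lambda'\ge\lambda\}$, where $\mathbf 1_I$ is the indicator vector of $I$; $S(\mathcal X)=(I_1,\dots,I_d)$. Regime (A1): for all $i$, $n_i\to\infty$, $k_i\to\infty$, $k_i/n_i\to0$. Regime (A2): fixed $\alpha\in[0,1]$, $\beta\in\mathbb R$; $n\to\infty$, $n_1=\dots=n_d$ with $\log n_i/\log n\to1$, $k_i=k$ with $\log k/\log n\to\alpha$, $\log(1/\lambda)/\log n\to\beta$. *)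

theory Defs
  imports "HOL-Probability.Probability"
begin

text \<open>Order-d tensors of size n 0 x ... x n (d-1): multi-indices are extensional
  functions i :: nat => nat with i j < n j for j < d.\<close>
definition tidx :: "nat \<Rightarrow> (nat \<Rightarrow> nat) \<Rightarrow> (nat \<Rightarrow> nat) set" where
  "tidx d n = PiE {..<d} (\<lambda>j. {..<n j})"

definition supports :: "nat \<Rightarrow> (nat \<Rightarrow> nat) \<Rightarrow> (nat \<Rightarrow> nat) \<Rightarrow> (nat \<Rightarrow> nat set) set" where
  "supports d n k = PiE {..<d} (\<lambda>j. {A. A \<subseteq> {..<n j} \<and> card A = k j})"

definition chc_tensor :: "nat \<Rightarrow> real \<Rightarrow> (nat \<Rightarrow> nat set) \<Rightarrow> (nat \<Rightarrow> nat) \<Rightarrow> real" where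
  "chc_tensor d lam I = (\<lambda>i. lam * (\<Prod>j<d. indicator (I j) (i j)))"

definition noise :: "nat \<Rightarrow> (nat \<Rightarrow> nat) \<Rightarrow> ((nat \<Rightarrow> nat) \<Rightarrow> real) measure" where
  "noise d n = PiM (tidx d n) (\<lambda>_. density lborel std_normal_density)"

definition score :: "nat \<Rightarrow> ((nat \<Rightarrow> nat) \<Rightarrow> real) \<Rightarrow> (nat \<Rightarrow> nat set) \<Rightarrow> real" where
  "score d Y I = (\<Sum>i\<in>PiE {..<d} I. Y i)"

text \<open>Event that every maximiser of the score (over all feasible supports), computed
  from Y = X + Z with X = chc_tensor d lam I, equals S(X) = I.\<close>
definition recovery_event ::
  "nat \<Rightarrow> (nat \<Rightarrow> nat) \<Rightarrow> (nat \<Rightarrow> nat) \<Rightarrow> real \<Rightarrow> (nat \<Rightarrow> nat set) \<Rightarrow> ((nat \<Rightarrow> nat) \<Rightarrow> real) set" where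
  "recovery_event d n k lam I =
     {Z \<in> space (noise d n). \<forall>J\<in>supports d n k. J \<noteq> I \<longrightarrow>
        score d (\<lambda>i. chc_tensor d lam I i + Z i) J < score d (\<lambda>i. chc_tensor d lam I i + Z i) I}"

definition success_prob :: "nat \<Rightarrow> (nat \<Rightarrow> nat) \<Rightarrow> (nat \<Rightarrow> nat) \<Rightarrow> real \<Rightarrow> (nat \<Rightarrow> nat set) \<Rightarrow> real" where
  "success_prob d n k lam I = measure (noise d n) (recovery_event d n k lam I)"

text \<open>Worst-case risk over the class CHC(k,n,lam): sup over X of P(estimate \<noteq> S(X)).\<close>
definition chc_risk :: "nat \<Rightarrow> (nat \<Rightarrow> nat) \<Rightarrow> (nat \<Rightarrow> nat) \<Rightarrow> real \<Rightarrow> real" where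
  "chc_risk d n k lam =
     (SUP p\<in>{(I, l). I \<in> supports d n k \<and> lam \<le> l}. 1 - success_prob d n k (snd p) (fst p))"

end

theory Submission
  imports Defs "HOL-Real_Asymp.Real_Asymp"
begin


lemma gauss_mgf:
  "(\<integral>\<^sup>+x. ennreal (exp (t*x)) \<partial>(density lborel std_normal_density)) = ennreal (exp (t\<^sup>2/2))"
proof -
  have eq: "ennreal (std_normal_density x) * ennreal (exp (t*x)) = ennreal (exp (t\<^sup>2/2)) * ennreal (normal_density t 1 x)" for x
  proof -
    have "std_normal_density x * exp (t*x) = exp (t\<^sup>2/2) * normal_density t 1 x"
    proof -
      have "exp (t*x) * exp (- x\<^sup>2 / 2) = exp (t\<^sup>2/2) * exp (- (x - t)\<^sup>2 / 2)"
        unfolding exp_add[symmetric] by (rule arg_cong[where f=exp]) (simp add: power2_eq_square field_simps)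
      then show ?thesis unfolding normal_density_def by (simp add: mult.commute)
    qed
    then show ?thesis by (simp add: ennreal_mult'[symmetric])
  qed
  have "(\<integral>\<^sup>+x. ennreal (exp (t*x)) \<partial>(density lborel std_normal_density))
      = (\<integral>\<^sup>+x. ennreal (std_normal_density x) * ennreal (exp (t*x)) \<partial>lborel)"
    by (subst nn_integral_density) auto
  also have "\<dots> = (\<integral>\<^sup>+x. ennreal (exp (t\<^sup>2/2)) * ennreal (normal_density t 1 x) \<partial>lborel)"
    by (simp add: eq)
  also have "\<dots> = ennreal (exp (t\<^sup>2/2)) * (\<integral>\<^sup>+x. ennreal (normal_density t 1 x) \<partial>lborel)"
    by (subst nn_integral_cmult) auto
  also have "(\<integral>\<^sup>+x. ennreal (normal_density t 1 x) \<partial>lborel) = 1"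
  proof -
    interpret prob_space "density lborel (normal_density t 1)" by (rule prob_space_normal_density) simp
    have "emeasure (density lborel (normal_density t 1)) (space (density lborel (normal_density t 1))) = 1"
      by (rule emeasure_space_1)
    then show ?thesis by (subst (asm) emeasure_density) auto
  qed
  finally show ?thesis by simp
qed

abbreviation "NM \<equiv> density lborel std_normal_density"

lemma comp_meas:
  assumes "i \<in> T"
  shows "(\<lambda>Z. Z i) \<in> borel_measurable (PiM T (\<lambda>_. NM))"
proof -
  have "(\<lambda>Z. Z i) \<in> measurable (PiM T (\<lambda>_. NM)) NM"
    using assms by (rule measurable_component_singleton)
  moreover have "measurable (PiM T (\<lambda>_. NM)) NM = borel_measurable (PiM T (\<lambda>_. NM))"
    by (rule measurable_cong_sets) simp_all
  ultimately show ?thesis by simp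
qed

lemma lin_meas:
  assumes "finite T"
  shows "(\<lambda>Z. \<Sum>i\<in>T. b i * Z i) \<in> borel_measurable (PiM T (\<lambda>_. NM))"
proof (rule borel_measurable_sum)
  fix i assume "i \<in> T"
  then have "(\<lambda>Z. Z i) \<in> borel_measurable (PiM T (\<lambda>_. NM))" by (rule comp_meas)
  then show "(\<lambda>Z. b i * Z i) \<in> borel_measurable (PiM T (\<lambda>_. NM))" by (rule borel_measurable_times[OF borel_measurable_const])
qed

lemma noise_mgf:
  assumes "finite T"
  shows "(\<integral>\<^sup>+Z. ennreal (exp (s * (\<Sum>i\<in>T. b i * Z i))) \<partial>PiM T (\<lambda>_. NM))
        = ennreal (exp (s\<^sup>2/2 * (\<Sum>i\<in>T. (b i)\<^sup>2)))"
proof -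
  have ps: "prob_space NM" by (rule prob_space_normal_density) simp
  interpret product_sigma_finite "\<lambda>_. NM"
    unfolding product_sigma_finite_def using prob_space_imp_sigma_finite[OF ps] by simp
  have eq: "ennreal (exp (s * (\<Sum>i\<in>T. b i * Z i))) = (\<Prod>i\<in>T. ennreal (exp (s * b i * Z i)))" for Z
  proof -
    have "exp (s * (\<Sum>i\<in>T. b i * Z i)) = (\<Prod>i\<in>T. exp (s * b i * Z i))"
      using assms by (simp add: sum_distrib_left exp_sum mult.assoc)
    then show ?thesis by (simp add: prod_ennreal)
  qed
  have "(\<integral>\<^sup>+Z. ennreal (exp (s * (\<Sum>i\<in>T. b i * Z i))) \<partial>PiM T (\<lambda>_. NM))
      = (\<integral>\<^sup>+Z. (\<Prod>i\<in>T. ennreal (exp (s * b i * Z i))) \<partial>PiM T (\<lambda>_. NM))"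
    by (simp add: eq)
  also have "\<dots> = (\<Prod>i\<in>T. \<integral>\<^sup>+x. ennreal (exp (s * b i * x)) \<partial>NM)"
    using assms by (intro product_nn_integral_prod) auto
  also have "\<dots> = (\<Prod>i\<in>T. ennreal (exp ((s * b i)\<^sup>2/2)))"
    by (simp add: gauss_mgf)
  also have "\<dots> = ennreal (\<Prod>i\<in>T. exp ((s * b i)\<^sup>2/2))"
    by (simp add: prod_ennreal)
  also have "(\<Prod>i\<in>T. exp ((s * b i)\<^sup>2/2)) = exp (s\<^sup>2/2 * (\<Sum>i\<in>T. (b i)\<^sup>2))"
    using assms by (simp add: exp_sum sum_distrib_left power_mult_distrib)
  finally show ?thesis .
qed


lemma noise_tail:
  assumes "finite T" "0 \<le> s"
  shows "measure (PiM T (\<lambda>_. NM)) {Z \<in> space (PiM T (\<lambda>_. NM)). t \<le> (\<Sum>i\<in>T. b i * Z i)}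
         \<le> exp (s\<^sup>2/2 * (\<Sum>i\<in>T. (b i)\<^sup>2) - s * t)"
proof -
  let ?P = "PiM T (\<lambda>_. NM)"
  let ?g = "\<lambda>Z. \<Sum>i\<in>T. b i * Z i"
  let ?A = "{Z \<in> space ?P. t \<le> ?g Z}"
  have gm[measurable]: "?g \<in> borel_measurable ?P" using assms(1) by (rule lin_meas)
  have A: "?A \<in> sets ?P" using gm by simp
  have le: "indicator ?A Z \<le> ennreal (exp (-(s*t)) * exp (s * ?g Z))" for Z
  proof (cases "Z \<in> ?A")
    case True
    then have "s * t \<le> s * ?g Z" using assms(2) by (simp add: mult_left_mono)
    then have "1 \<le> exp (-(s*t)) * exp (s * ?g Z)" by (simp add: exp_add[symmetric])
    then show ?thesis using True by simp
  qed simp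
  have "emeasure ?P ?A = (\<integral>\<^sup>+Z. indicator ?A Z \<partial>?P)"
    using A by simp
  also have "\<dots> \<le> (\<integral>\<^sup>+Z. ennreal (exp (-(s*t))) * ennreal (exp (s * ?g Z)) \<partial>?P)"
    by (intro nn_integral_mono) (simp add: le ennreal_mult'[symmetric])
  also have "\<dots> = ennreal (exp (-(s*t))) * (\<integral>\<^sup>+Z. ennreal (exp (s * ?g Z)) \<partial>?P)"
    by (subst nn_integral_cmult) auto
  also have "\<dots> = ennreal (exp (-(s*t))) * ennreal (exp (s\<^sup>2/2 * (\<Sum>i\<in>T. (b i)\<^sup>2)))"
    using assms(1) by (simp add: noise_mgf)
  also have "\<dots> = ennreal (exp (s\<^sup>2/2 * (\<Sum>i\<in>T. (b i)\<^sup>2) - s * t))"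
    by (simp add: ennreal_mult'[symmetric] exp_add[symmetric])
  finally show ?thesis by (simp add: measure_def enn2real_leI)
qed




lemma pow_sum:
  fixes y :: real
  assumes "finite S"
  shows "(\<Sum>T\<in>Pow S. y ^ card T) = (1 + y) ^ card S"
  using assms
proof (induction S rule: finite_induct)
  case empty
  then show ?case by simp
next
  case (insert a S)
  have disj: "Pow S \<inter> insert a ` Pow S = {}" using insert.hyps by auto
  have inj: "inj_on (insert a) (Pow S)" using insert.hyps
    by (intro inj_onI) (metis PowD insert_absorb insert_ident subset_iff)
  have fin: "finite (Pow S)" using insert.hyps by simp
  have "(\<Sum>T\<in>Pow (insert a S). y ^ card T) = (\<Sum>T\<in>Pow S. y ^ card T) + (\<Sum>T\<in>insert a ` Pow S. y ^ card T)"
    unfolding Pow_insert using fin disj by (intro sum.union_disjoint) auto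
  also have "(\<Sum>T\<in>insert a ` Pow S. y ^ card T) = (\<Sum>T\<in>Pow S. y ^ card (insert a T))"
    using inj by (simp add: sum.reindex)
  also have "\<dots> = (\<Sum>T\<in>Pow S. y * y ^ card T)"
  proof (rule sum.cong[OF refl])
    fix T assume "T \<in> Pow S"
    then have "finite T" "a \<notin> T" using insert.hyps finite_subset by auto
    then show "y ^ card (insert a T) = y * y ^ card T" by simp
  qed
  also have "\<dots> = y * (1 + y) ^ card S" using insert.IH by (simp add: sum_distrib_left[symmetric])
  finally show ?case using insert.hyps insert.IH by (simp add: algebra_simps)
qed

lemma count_bound:
  fixes x :: real
  assumes "I0 \<subseteq> {..<n}" "0 \<le> x"
  shows "(\<Sum>A\<in>{A. A \<subseteq> {..<n} \<and> card A = card I0}. x ^ card (I0 - A)) \<le> (1 + sqrt x) ^ n"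
proof -
  let ?K = "{A. A \<subseteq> {..<n} \<and> card A = card I0}"
  define f where "f A = (I0 - A) \<union> (A - I0)" for A :: "nat set"
  have finI: "finite I0" using assms(1) finite_subset by blast
  have eqx: "x ^ card (I0 - A) = sqrt x ^ card (f A)" if "A \<in> ?K" for A
  proof -
    have finA: "finite A" using that finite_subset by auto
    have c1: "card A = card (A \<inter> I0) + card (A - I0)"
      using finA by (rule card_Int_Diff)
    have c2: "card I0 = card (A \<inter> I0) + card (I0 - A)"
      using card_Int_Diff[OF finI, of A] by (simp add: Int_commute)
    have "card (A - I0) = card (I0 - A)" using that c1 c2 by simp
    moreover have "card (f A) = card (I0 - A) + card (A - I0)"
      unfolding f_def using finA finI by (intro card_Un_disjoint) auto
    ultimately have "card (f A) = 2 * card (I0 - A)" by simp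
    then have "sqrt x ^ card (f A) = (sqrt x ^ 2) ^ card (I0 - A)" by (simp add: power_mult)
    then show ?thesis using assms(2) by simp
  qed
  have inj: "inj_on f ?K"
  proof (rule inj_onI)
    fix A B assume "f A = f B"
    have "A = (I0 - f A) \<union> (f A - I0)" for A unfolding f_def by auto
    then show "A = B" using \<open>f A = f B\<close> by metis
  qed
  have "(\<Sum>A\<in>?K. x ^ card (I0 - A)) = (\<Sum>A\<in>?K. sqrt x ^ card (f A))"
    using eqx by (rule sum.cong[OF refl])
  also have "\<dots> = (\<Sum>T\<in>f ` ?K. sqrt x ^ card T)"
    using inj by (simp add: sum.reindex)
  also have "\<dots> \<le> (\<Sum>T\<in>Pow {..<n}. sqrt x ^ card T)"
    using assms by (intro sum_mono2) (auto simp: f_def)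
  also have "\<dots> = (1 + sqrt x) ^ n" by (simp add: pow_sum)
  finally show ?thesis .
qed



lemma prod_ind:
  fixes d :: nat and i :: "nat \<Rightarrow> nat"
  assumes "i \<in> extensional {..<d}"
  shows "(\<Prod>j<d. indicator (I j) (i j) :: real) = indicator (PiE {..<d} I) i"
proof (cases "i \<in> PiE {..<d} I")
  case True
  then show ?thesis by (simp add: PiE_iff)
next
  case False
  then obtain j where "j < d" "i j \<notin> I j" using assms by (auto simp: PiE_iff)
  then have "\<exists>a\<in>{..<d}. indicator (I a) (i a) = (0::real)"
    by (intro bexI[of _ j]) (simp_all add: indicator_def)
  then have "(\<Prod>j<d. indicator (I j) (i j) :: real) = 0"
    by (rule prod_zero[OF finite_lessThan])
  then show ?thesis using False by simp
qed

lemma supp_sub: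
  assumes "I \<in> supports d n k"
  shows "PiE {..<d} I \<subseteq> tidx d n" "\<And>j. j < d \<Longrightarrow> card (I j) = k j" "\<And>j. j < d \<Longrightarrow> I j \<subseteq> {..<n j}"
  using assms by (auto simp: supports_def tidx_def PiE_iff)

lemma finite_tidx: "finite (tidx d n)"
  by (simp add: tidx_def finite_PiE)

lemma card_box:
  assumes "I \<in> supports d n k"
  shows "card (PiE {..<d} I) = (\<Prod>j<d. k j)"
  using supp_sub[OF assms] by (simp add: card_PiE)

lemma score_diff:
  assumes I: "I \<in> supports d n k" and J: "J \<in> supports d n k"
  shows "score d (\<lambda>i. chc_tensor d lam I i + Z i) J - score d (\<lambda>i. chc_tensor d lam I i + Z i) I
   = (\<Sum>i\<in>tidx d n. (indicator (PiE {..<d} J) i - indicator (PiE {..<d} I) i) * Z i)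
     - lam * real (card (PiE {..<d} I - PiE {..<d} J))"
proof -
  let ?BI = "PiE {..<d} I" and ?BJ = "PiE {..<d} J" and ?T = "tidx d n"
  have fT: "finite ?T" by (rule finite_tidx)
  have sI: "?BI \<subseteq> ?T" and sJ: "?BJ \<subseteq> ?T" using supp_sub I J by blast+
  have fI: "finite ?BI" and fJ: "finite ?BJ" using fT sI sJ finite_subset by blast+
  have chc: "(\<Sum>i\<in>B. chc_tensor d lam I i) = lam * real (card (B \<inter> ?BI))"
    if "B \<subseteq> ?T" for B
  proof -
    have fB: "finite B" using that fT finite_subset by blast
    have "(\<Sum>i\<in>B. chc_tensor d lam I i) = (\<Sum>i\<in>B. lam * indicator ?BI i)"
    proof (rule sum.cong[OF refl])
      fix i assume "i \<in> B"
      then have "i \<in> extensional {..<d}" using that by (auto simp: tidx_def PiE_iff)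
      then show "chc_tensor d lam I i = lam * indicator ?BI i"
        unfolding chc_tensor_def by (simp add: prod_ind)
    qed
    also have "\<dots> = lam * real (card (B \<inter> ?BI))"
      using fB sum.inter_restrict[OF fB, of "\<lambda>_. 1::real" ?BI]
      by (simp add: sum_distrib_left[symmetric] indicator_def)
    finally show ?thesis .
  qed
  have zs: "(\<Sum>i\<in>B. Z i) = (\<Sum>i\<in>?T. indicator B i * Z i)" if "B \<subseteq> ?T" for B
  proof -
    have tb: "?T \<inter> B = B" using that by blast
    have "(\<Sum>i\<in>?T. indicator B i * Z i) = (\<Sum>i\<in>?T. if i \<in> B then Z i else 0)"
      by (rule sum.cong) (auto simp: indicator_def)
    also have "\<dots> = (\<Sum>i\<in>?T \<inter> B. Z i)" using sum.inter_restrict[OF fT, of Z B] by simp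
    finally show ?thesis unfolding tb by simp
  qed
  have sc: "score d (\<lambda>i. chc_tensor d lam I i + Z i) K = lam * real (card (PiE {..<d} K \<inter> ?BI))
      + (\<Sum>i\<in>?T. indicator (PiE {..<d} K) i * Z i)" if "PiE {..<d} K \<subseteq> ?T" for K
    unfolding score_def sum.distrib chc[OF that] zs[OF that] by simp
  have cI: "card ?BI = card (?BI \<inter> ?BJ) + card (?BI - ?BJ)" using fI by (rule card_Int_Diff)
  have e1: "(\<Sum>i\<in>?T. (indicator ?BJ i - indicator ?BI i) * Z i)
     = (\<Sum>i\<in>?T. indicator ?BJ i * Z i) - (\<Sum>i\<in>?T. indicator ?BI i * Z i)"
    by (simp only: left_diff_distrib sum_subtractf)
  have e2: "?BJ \<inter> ?BI = ?BI \<inter> ?BJ" "?BI \<inter> ?BI = ?BI" by blast+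
  have e3: "real (card ?BI) = real (card (?BI \<inter> ?BJ)) + real (card (?BI - ?BJ))"
    using cI by simp
  show ?thesis
    unfolding sc[OF sJ] sc[OF sI] e1 e2 e3 by (simp add: algebra_simps)
qed



lemma sum_ind_card:
  assumes "finite T" "B \<subseteq> T"
  shows "(\<Sum>i\<in>T. indicator B i :: real) = real (card B)"
proof -
  have "T \<inter> B = B" using assms by blast
  then show ?thesis using sum.inter_restrict[OF assms(1), of "\<lambda>_. 1::real" B]
    by (simp add: indicator_def of_bool_def)
qed

lemma fail_J:
  assumes I: "I \<in> supports d n k" and J: "J \<in> supports d n k" and lam: "0 \<le> lam"
  shows "measure (noise d n) {Z \<in> space (noise d n).
            score d (\<lambda>i. chc_tensor d lam I i + Z i) I \<le> score d (\<lambda>i. chc_tensor d lam I i + Z i) J}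
         \<le> exp (-(lam\<^sup>2 * real (card (PiE {..<d} I - PiE {..<d} J))) / 4)"
proof -
  let ?BI = "PiE {..<d} I" and ?BJ = "PiE {..<d} J" and ?T = "tidx d n"
  define b where "b i = (indicator ?BJ i - indicator ?BI i :: real)" for i
  define D where "D = real (card (?BI - ?BJ))"
  have fT: "finite ?T" by (rule finite_tidx)
  have sI: "?BI \<subseteq> ?T" and sJ: "?BJ \<subseteq> ?T" using supp_sub I J by blast+
  have fI: "finite ?BI" and fJ: "finite ?BJ" using fT sI sJ finite_subset by blast+
  have set_eq: "{Z \<in> space (noise d n).
            score d (\<lambda>i. chc_tensor d lam I i + Z i) I \<le> score d (\<lambda>i. chc_tensor d lam I i + Z i) J}
      = {Z \<in> space (PiM ?T (\<lambda>_. NM)). lam * D \<le> (\<Sum>i\<in>?T. b i * Z i)}"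
  proof -
    have "score d (\<lambda>i. chc_tensor d lam I i + Z i) I \<le> score d (\<lambda>i. chc_tensor d lam I i + Z i) J
          \<longleftrightarrow> lam * D \<le> (\<Sum>i\<in>?T. b i * Z i)" for Z
      using score_diff[OF I J, of lam Z] unfolding b_def D_def by linarith
    then show ?thesis unfolding noise_def by simp
  qed
  have cards: "card ?BJ = card ?BI" using card_box I J by metis
  have cJ: "card ?BJ = card (?BJ \<inter> ?BI) + card (?BJ - ?BI)" using fJ by (rule card_Int_Diff)
  have cI: "card ?BI = card (?BI \<inter> ?BJ) + card (?BI - ?BJ)" using fI by (rule card_Int_Diff)
  have cD: "card (?BJ - ?BI) = card (?BI - ?BJ)" using cards cJ cI by (simp add: Int_commute)
  have bsq: "(b i)\<^sup>2 = indicator (?BJ - ?BI) i + indicator (?BI - ?BJ) i" for i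
    unfolding b_def by (simp add: indicator_def)
  have sumb: "(\<Sum>i\<in>?T. (b i)\<^sup>2) = 2 * D"
  proof -
    have "(\<Sum>i\<in>?T. (b i)\<^sup>2) = (\<Sum>i\<in>?T. indicator (?BJ - ?BI) i) + (\<Sum>i\<in>?T. indicator (?BI - ?BJ) i)"
      unfolding bsq by (rule sum.distrib)
    also have "\<dots> = real (card (?BJ - ?BI)) + real (card (?BI - ?BJ))"
    proof -
      have "?BJ - ?BI \<subseteq> ?T" "?BI - ?BJ \<subseteq> ?T" using sI sJ by blast+
      then show ?thesis using fT by (simp add: sum_ind_card)
    qed
    finally show ?thesis using cD unfolding D_def by simp
  qed
  have "measure (PiM ?T (\<lambda>_. NM)) {Z \<in> space (PiM ?T (\<lambda>_. NM)). lam * D \<le> (\<Sum>i\<in>?T. b i * Z i)}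
      \<le> exp ((lam/2)\<^sup>2/2 * (\<Sum>i\<in>?T. (b i)\<^sup>2) - (lam/2) * (lam * D))"
    using fT lam by (intro noise_tail) auto
  also have "\<dots> = exp (-(lam\<^sup>2 * D) / 4)"
    unfolding sumb by (simp add: power2_eq_square field_simps)
  finally have X: "measure (PiM ?T (\<lambda>_. NM)) {Z \<in> space (PiM ?T (\<lambda>_. NM)). lam * D \<le> (\<Sum>i\<in>?T. b i * Z i)}
      \<le> exp (-(lam\<^sup>2 * D) / 4)" .
  show ?thesis unfolding set_eq using X unfolding D_def noise_def .
qed

lemma D_bound:
  assumes I: "I \<in> supports d n k" and J: "J \<in> supports d n k" and j: "j < d"
  shows "real (card (I j - J j)) * (\<Prod>z\<in>{..<d} - {j}. real (k z))
        \<le> real (card (PiE {..<d} I - PiE {..<d} J))"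
proof -
  let ?BI = "PiE {..<d} I" and ?BJ = "PiE {..<d} J"
  let ?I' = "I(j := I j - J j)"
  have fI: "finite ?BI" using supp_sub[OF I] finite_tidx finite_subset by blast
  have sub: "PiE {..<d} ?I' \<subseteq> ?BI - ?BJ"
  proof
    fix x assume x: "x \<in> PiE {..<d} ?I'"
    have "x \<in> ?BI" using x by (auto simp: PiE_iff split: if_splits)
    moreover have "x j \<notin> J j" using x j unfolding PiE_iff by (metis fun_upd_same lessThan_iff Diff_iff)
    then have "x \<notin> ?BJ" using j by (auto simp: PiE_iff)
    ultimately show "x \<in> ?BI - ?BJ" by blast
  qed
  have "card (PiE {..<d} ?I') = (\<Prod>z<d. card (?I' z))" by (simp add: card_PiE)
  also have "\<dots> = card (?I' j) * (\<Prod>z\<in>{..<d} - {j}. card (?I' z))"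
    using j by (intro prod.remove) auto
  also have "(\<Prod>z\<in>{..<d} - {j}. card (?I' z)) = (\<Prod>z\<in>{..<d} - {j}. k z)"
    using supp_sub(2)[OF I] by (intro prod.cong) auto
  finally have "card (PiE {..<d} ?I') = card (?I' j) * (\<Prod>z\<in>{..<d} - {j}. k z)" .
  then have "card (PiE {..<d} ?I') = card (I j - J j) * (\<Prod>z\<in>{..<d} - {j}. k z)"
    by (simp only: fun_upd_same)
  moreover have "card (PiE {..<d} ?I') \<le> card (?BI - ?BJ)"
    using sub fI by (intro card_mono) auto
  ultimately have "card (I j - J j) * (\<Prod>z\<in>{..<d} - {j}. k z) \<le> card (?BI - ?BJ)" by simp
  then have "real (card (I j - J j) * (\<Prod>z\<in>{..<d} - {j}. k z)) \<le> real (card (?BI - ?BJ))"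
    by (simp only: of_nat_le_iff)
  then show ?thesis by simp
qed



lemma final_ineq:
  fixes y :: real and v :: "nat \<Rightarrow> real" and n :: "nat \<Rightarrow> nat"
  assumes y0: "0 \<le> y" and h: "\<And>j. j < d \<Longrightarrow> 1 \<le> v j \<and> real (n j) \<le> 2 * v j \<and> y \<le> 1 / (v j)\<^sup>2"
  shows "(\<Prod>j<d. (1 + y) ^ n j) - 1 \<le> 2 * exp (2 * real d) * (\<Sum>j<d. v j powr (-1))"
proof -
  define u where "u = (\<Sum>j<d. real (n j) * y)"
  have "(\<Prod>j<d. (1 + y) ^ n j) \<le> (\<Prod>j<d. exp (real (n j) * y))"
  proof (rule prod_mono)
    fix j assume "j \<in> {..<d}"
    have "(1 + y) ^ n j \<le> exp y ^ n j" using y0 by (intro power_mono) auto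
    then show "0 \<le> (1 + y) ^ n j \<and> (1 + y) ^ n j \<le> exp (real (n j) * y)"
      using y0 by (simp add: exp_of_nat_mult)
  qed
  also have "\<dots> = exp u" unfolding u_def by (simp add: exp_sum)
  finally have p: "(\<Prod>j<d. (1 + y) ^ n j) \<le> exp u" .
  have t: "real (n j) * y \<le> 2 * v j powr (-1)" if "j < d" for j
  proof -
    have hj: "1 \<le> v j" "real (n j) \<le> 2 * v j" "y \<le> 1 / (v j)\<^sup>2" using h[OF that] by auto
    have "real (n j) * y \<le> (2 * v j) * (1 / (v j)\<^sup>2)"
      using hj y0 by (intro mult_mono) auto
    also have "\<dots> = 2 * v j powr (-1)" using hj(1)
      by (simp add: powr_minus power2_eq_square field_simps)
    finally show ?thesis .
  qed
  have uS: "u \<le> 2 * (\<Sum>j<d. v j powr (-1))"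
    unfolding u_def sum_distrib_left by (intro sum_mono t) auto
  have S: "(\<Sum>j<d. v j powr (-1)) \<le> real d"
  proof -
    have "(\<Sum>j<d. v j powr (-1)) \<le> (\<Sum>j<d. 1)"
    proof (intro sum_mono)
      fix j assume "j \<in> {..<d}"
      then have "1 \<le> v j" using h by auto
      then show "v j powr (-1) \<le> 1" by (simp add: powr_minus inverse_le_1_iff)
    qed
    then show ?thesis by simp
  qed
  have u0: "0 \<le> u" unfolding u_def using y0 by (intro sum_nonneg) auto
  have "exp u - 1 \<le> u * exp u"
  proof -
    have "1 + (-u) \<le> exp (-u)" by (rule exp_ge_add_one_self)
    then have "(1 - u) * exp u \<le> exp (-u) * exp u" by (intro mult_right_mono) auto
    also have "\<dots> = 1" by (simp add: exp_minus)
    finally show ?thesis by (simp add: algebra_simps)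
  qed
  also have "\<dots> \<le> u * exp (2 * real d)" using u0 uS S by (intro mult_left_mono) auto
  also have "\<dots> \<le> 2 * (\<Sum>j<d. v j powr (-1)) * exp (2 * real d)"
    using uS by (intro mult_right_mono) auto
  finally show ?thesis using p by (simp add: algebra_simps)
qed



lemma part1:
  fixes d :: nat and n k :: "nat \<Rightarrow> nat" and lam lam' :: real
  assumes kn: "\<forall>j<d. 1 \<le> k j \<and> real (k j) \<le> 1/2 * real (n j)"
    and lamc: "4 * sqrt (real d) * sqrt ((\<Sum>j<d. ln (real (n j) - real (k j))) /
                         Min ((\<lambda>j. \<Prod>z\<in>{..<d} - {j}. real (k z)) ` {..<d})) \<le> lam"
    and I: "I \<in> supports d n k" and ll: "lam \<le> lam'" and d: "1 \<le> d"
  shows "1 - 2 * exp (2 * real d) * (\<Sum>j<d. (real (n j) - real (k j)) powr (-1)) \<le> success_prob d n k lam' I"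
proof -
  define L where "L = (\<Sum>j<d. ln (real (n j) - real (k j)))"
  define M where "M = Min ((\<lambda>j. \<Prod>z\<in>{..<d} - {j}. real (k z)) ` {..<d})"
  define S where "S = supports d n k"
  define P where "P = noise d n"
  define Y where "Y Z = (\<lambda>i. chc_tensor d lam' I i + Z i)" for Z :: "(nat\<Rightarrow>nat) \<Rightarrow> real"
  define F where "F J = {Z \<in> space P. score d (Y Z) I \<le> score d (Y Z) J}" for J
  define D where "D J = real (card (PiE {..<d} I - PiE {..<d} J))" for J
  define a where "a = lam'^2 * M / (4 * real d)"
  define x where "x = exp (- a)"
  have vpos: "1 \<le> real (n j) - real (k j) \<and> real (n j) \<le> 2 * (real (n j) - real (k j))" if "j < d" for j
    using kn that by force
  have L0: "0 \<le> L" unfolding L_def using vpos by (intro sum_nonneg) auto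
  have Lj: "ln (real (n j) - real (k j)) \<le> L" if "j < d" for j
    unfolding L_def using vpos that by (intro member_le_sum) auto
  have Mle: "M \<le> (\<Prod>z\<in>{..<d} - {j}. real (k z))" if "j < d" for j
    unfolding M_def using that by (intro Min_le) auto
  have M1: "1 \<le> M"
  proof -
    have "M \<in> (\<lambda>j. \<Prod>z\<in>{..<d} - {j}. real (k z)) ` {..<d}"
      unfolding M_def using d by (intro Min_in) (auto simp: lessThan_empty_iff)
    then obtain j where "M = (\<Prod>z\<in>{..<d} - {j}. real (k z))" by auto
    also have "1 \<le> \<dots>" using kn by (intro prod_ge_1) auto
    finally show ?thesis .
  qed
  have LM0: "0 \<le> L / M" using L0 M1 by simp
  have lam0: "0 \<le> lam'"
    using lamc ll LM0 unfolding L_def[symmetric] M_def[symmetric] by (smt (verit) mult_nonneg_nonneg real_sqrt_ge_zero of_nat_0_le_iff)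
  have lamsq: "16 * real d * L \<le> lam'^2 * M"
  proof -
    have "4 * sqrt (real d) * sqrt (L / M) \<le> lam'"
      using lamc ll unfolding L_def[symmetric] M_def[symmetric] by simp
    then have "(4 * sqrt (real d) * sqrt (L / M))^2 \<le> lam'^2"
      using LM0 by (intro power_mono) auto
    also have "(4 * sqrt (real d) * sqrt (L / M))^2 = 16 * real d * (L / M)"
      using LM0 by (simp add: power_mult_distrib)
    finally have "16 * real d * (L / M) * M \<le> lam'^2 * M" using M1 by (intro mult_right_mono) auto
    then show ?thesis using M1 by simp
  qed
  have ps: "prob_space P" unfolding P_def noise_def
    by (intro prob_space_PiM) (rule prob_space_normal_density, simp)
  interpret prob_space P by (rule ps)
  have finS: "finite S" unfolding S_def supports_def
    by (intro finite_PiE) (auto intro: finite_subset[of _ "Pow {..<n _}"])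
  have IS: "I \<in> S" using I S_def by simp
  have scm: "(\<lambda>Z. score d (Y Z) J) \<in> borel_measurable P" if J: "J \<in> S" for J
    unfolding score_def Y_def
  proof (rule borel_measurable_sum)
    fix i assume "i \<in> PiE {..<d} J"
    then have "i \<in> tidx d n" using supp_sub J S_def by blast
    then have "(\<lambda>Z. Z i) \<in> borel_measurable P" unfolding P_def noise_def by (rule comp_meas)
    then show "(\<lambda>Z. chc_tensor d lam' I i + Z i) \<in> borel_measurable P"
      by (rule borel_measurable_add[OF borel_measurable_const])
  qed
  have Fm: "F J \<in> sets P" if "J \<in> S" for J
    unfolding F_def by (rule borel_measurable_le[OF scm[OF IS] scm[OF that]])
  have Eeq: "recovery_event d n k lam' I = space P - (\<Union>J\<in>S-{I}. F J)"
    unfolding recovery_event_def F_def Y_def P_def S_def by (auto simp: not_less)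
  have Um: "(\<Union>J\<in>S-{I}. F J) \<in> sets P" using finS Fm by (intro sets.finite_UN) auto
  have sp: "success_prob d n k lam' I = 1 - measure P (\<Union>J\<in>S-{I}. F J)"
    unfolding success_prob_def P_def[symmetric] Eeq by (rule prob_compl[OF Um])
  have perJ: "measure P (F J) \<le> (\<Prod>j<d. x ^ card (I j - J j))" if J: "J \<in> S" for J
  proof -
    have "measure P (F J) \<le> exp (-(lam'^2 * D J) / 4)"
      unfolding F_def P_def Y_def D_def using fail_J[OF I J[unfolded S_def] lam0] .
    also have "\<dots> \<le> exp (-(a * (\<Sum>j<d. real (card (I j - J j)))))"
    proof -
      have "M * (\<Sum>j<d. real (card (I j - J j))) = (\<Sum>j<d. real (card (I j - J j)) * M)"
        by (simp add: sum_distrib_left mult.commute)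
      also have "\<dots> \<le> (\<Sum>j<d. D J)"
      proof (rule sum_mono)
        fix j assume j: "j \<in> {..<d}"
        have "real (card (I j - J j)) * M \<le> real (card (I j - J j)) * (\<Prod>z\<in>{..<d} - {j}. real (k z))"
          using Mle j by (intro mult_left_mono) auto
        also have "\<dots> \<le> D J" unfolding D_def using D_bound[OF I J[unfolded S_def]] j by auto
        finally show "real (card (I j - J j)) * M \<le> D J" .
      qed
      also have "\<dots> = real d * D J" by simp
      finally have "M * (\<Sum>j<d. real (card (I j - J j))) \<le> real d * D J" .
      then have "lam'^2 * (M * (\<Sum>j<d. real (card (I j - J j)))) \<le> lam'^2 * (real d * D J)"
        by (intro mult_left_mono) auto
      then have "a * (\<Sum>j<d. real (card (I j - J j))) \<le> lam'^2 * D J / 4"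
        unfolding a_def using d by (simp add: field_simps)
      then show ?thesis by simp
    qed
    also have "\<dots> = (\<Prod>j<d. x ^ card (I j - J j))"
      unfolding x_def exp_of_nat_mult[symmetric]
      by (simp add: exp_sum[symmetric] sum_distrib_left mult.commute sum_negf)
    finally show ?thesis .
  qed
  have "measure P (\<Union>J\<in>S-{I}. F J) \<le> (\<Sum>J\<in>S-{I}. measure P (F J))"
    using finS Fm by (intro finite_measure_subadditive_finite) auto
  also have "\<dots> \<le> (\<Sum>J\<in>S-{I}. \<Prod>j<d. x ^ card (I j - J j))"
    using perJ by (intro sum_mono) auto
  also have "\<dots> = (\<Sum>J\<in>S. \<Prod>j<d. x ^ card (I j - J j)) - 1"
    using finS IS by (simp add: sum_diff1)
  also have "(\<Sum>J\<in>S. \<Prod>j<d. x ^ card (I j - J j))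
      = (\<Prod>j<d. \<Sum>A\<in>{A. A \<subseteq> {..<n j} \<and> card A = k j}. x ^ card (I j - A))"
    unfolding S_def supports_def
    by (rule prod_sum_PiE[symmetric]) (auto intro: finite_subset[of _ "Pow {..<n _}"])
  also have "\<dots> \<le> (\<Prod>j<d. (1 + sqrt x) ^ n j)"
  proof (rule prod_mono)
    fix j assume j: "j \<in> {..<d}"
    have "(\<Sum>A\<in>{A. A \<subseteq> {..<n j} \<and> card A = k j}. x ^ card (I j - A))
        = (\<Sum>A\<in>{A. A \<subseteq> {..<n j} \<and> card A = card (I j)}. x ^ card (I j - A))"
      using supp_sub(2)[OF I] j by simp
    also have "\<dots> \<le> (1 + sqrt x) ^ n j"
      using supp_sub(3)[OF I] j unfolding x_def by (intro count_bound) auto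
    finally show "0 \<le> (\<Sum>A\<in>{A. A \<subseteq> {..<n j} \<and> card A = k j}. x ^ card (I j - A)) \<and>
        (\<Sum>A\<in>{A. A \<subseteq> {..<n j} \<and> card A = k j}. x ^ card (I j - A)) \<le> (1 + sqrt x) ^ n j"
      unfolding x_def by (auto intro: sum_nonneg)
  qed
  also have "(\<Prod>j<d. (1 + sqrt x) ^ n j) - 1 \<le> 2 * exp (2 * real d) * (\<Sum>j<d. (real (n j) - real (k j)) powr (-1))"
  proof (rule final_ineq)
    show "0 \<le> sqrt x" by (simp add: x_def)
    fix j assume j: "j < d"
    have sx: "sqrt x = exp (- (a/2))"
    proof -
      have "exp (- (a/2))^2 = x" unfolding x_def by (simp add: power2_eq_square exp_add[symmetric])
      then show ?thesis by (metis abs_of_nonneg exp_ge_zero real_sqrt_abs)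
    qed
    have "2 * L \<le> a / 2" unfolding a_def using lamsq d by (simp add: field_simps)
    then have "2 * ln (real (n j) - real (k j)) \<le> a / 2" using Lj[OF j] by simp
    then have "exp (- (a/2)) \<le> exp (- (2 * ln (real (n j) - real (k j))))" by simp
    also have "\<dots> = 1 / (real (n j) - real (k j))^2"
    proof -
      have v: "0 < real (n j) - real (k j)" using vpos[OF j] by simp
      have "exp (2 * ln (real (n j) - real (k j))) = (real (n j) - real (k j))^2"
        using exp_of_nat_mult[of 2 "ln (real (n j) - real (k j))"] v by simp
      then show ?thesis by (simp add: exp_minus field_simps)
    qed
    finally show "1 \<le> real (n j) - real (k j) \<and> real (n j) \<le> 2 * (real (n j) - real (k j))
        \<and> sqrt x \<le> 1 / (real (n j) - real (k j))\<^sup>2" using vpos[OF j] sx by simp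
  qed
  finally show ?thesis unfolding sp by simp
qed



lemma lnln_lim: "((\<lambda>x::real. ln (ln x) / ln x) \<longlongrightarrow> 0) at_top"
  by real_asymp

lemma asym:
  fixes K :: real and d :: nat
  assumes K: "0 < K" and gam: "\<beta> < real (d - 1) * \<alpha> / 2"
    and lpos: "\<forall>t. 0 < lams t"
    and hN: "((\<lambda>t. ln (real (Ns t)) / ln (real t)) \<longlongrightarrow> 1) sequentially"
    and hk: "((\<lambda>t. ln (real (ks t)) / ln (real t)) \<longlongrightarrow> \<alpha>) sequentially"
    and hl: "((\<lambda>t. ln (1 / lams t) / ln (real t)) \<longlongrightarrow> \<beta>) sequentially"
    and N: "filterlim Ns at_top sequentially"
    and k: "filterlim ks at_top sequentially"
  shows "eventually (\<lambda>t. K * ln (real (Ns t)) \<le> (lams t)^2 * real (ks t) ^ (d - 1)) sequentially"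
proof -
  define e where "e t = 2 * ln (lams t) + real (d - 1) * ln (real (ks t)) - ln K - ln (ln (real (Ns t)))" for t
  define \<gamma> where "\<gamma> = real (d - 1) * \<alpha> - 2 * \<beta>"
  have g0: "0 < \<gamma>" unfolding \<gamma>_def using gam by simp
  have Nr: "filterlim (\<lambda>t. real (Ns t)) at_top sequentially"
    by (rule filterlim_compose[OF filterlim_real_sequentially N])
  have kr: "filterlim (\<lambda>t. real (ks t)) at_top sequentially"
    by (rule filterlim_compose[OF filterlim_real_sequentially k])
  have lnt: "filterlim (\<lambda>t. ln (real t)) at_top sequentially"
    by (rule filterlim_compose[OF ln_at_top filterlim_real_sequentially])
  have t1: "((\<lambda>t. ln (lams t) / ln (real t)) \<longlongrightarrow> - \<beta>) sequentially"
  proof -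
    have "((\<lambda>t. - (ln (1 / lams t) / ln (real t))) \<longlongrightarrow> - \<beta>) sequentially"
      by (intro tendsto_minus hl)
    moreover have "- (ln (1 / lams t) / ln (real t)) = ln (lams t) / ln (real t)" for t
      using lpos by (simp add: ln_div)
    ultimately show ?thesis by simp
  qed
  have t2: "((\<lambda>t. ln K / ln (real t)) \<longlongrightarrow> 0) sequentially"
    by (intro tendsto_divide_0[OF tendsto_const] filterlim_at_top_imp_at_infinity lnt)
  have t3: "((\<lambda>t. ln (ln (real (Ns t))) / ln (real t)) \<longlongrightarrow> 0) sequentially"
  proof -
    have a: "((\<lambda>t. ln (ln (real (Ns t))) / ln (real (Ns t))) \<longlongrightarrow> 0) sequentially"
      by (rule filterlim_compose[OF lnln_lim Nr])
    have b: "((\<lambda>t. (ln (ln (real (Ns t))) / ln (real (Ns t))) * (ln (real (Ns t)) / ln (real t))) \<longlongrightarrow> 0) sequentially"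
      using tendsto_mult[OF a hN] by simp
    have ev:  "eventually (\<lambda>t. (ln (ln (real (Ns t))) / ln (real (Ns t))) * (ln (real (Ns t)) / ln (real t))
        = ln (ln (real (Ns t))) / ln (real t)) sequentially"
    proof -
      have "eventually (\<lambda>t. 2 \<le> real (Ns t)) sequentially" using Nr unfolding filterlim_at_top by blast
      then show ?thesis by eventually_elim simp
    qed
    show ?thesis by (rule Lim_transform_eventually[OF b ev])
  qed
  have "((\<lambda>t. 2 * (ln (lams t) / ln (real t)) + real (d - 1) * (ln (real (ks t)) / ln (real t))
        - ln K / ln (real t) - ln (ln (real (Ns t))) / ln (real t)) \<longlongrightarrow>
        2 * (- \<beta>) + real (d - 1) * \<alpha> - 0 - 0) sequentially"
    by (intro tendsto_intros t1 hk t2 t3)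
  moreover have "2 * (ln (lams t) / ln (real t)) + real (d - 1) * (ln (real (ks t)) / ln (real t))
        - ln K / ln (real t) - ln (ln (real (Ns t))) / ln (real t) = e t / ln (real t)" for t
    unfolding e_def by (simp add: diff_divide_distrib add_divide_distrib)
  ultimately have "((\<lambda>t. e t / ln (real t)) \<longlongrightarrow> \<gamma>) sequentially"
    unfolding \<gamma>_def by simp
  then have ev1: "eventually (\<lambda>t. 0 < e t / ln (real t)) sequentially"
    using g0 by (rule order_tendstoD)
  have ev2: "eventually (\<lambda>t. 0 < ln (real t)) sequentially"
    using lnt by (simp add: filterlim_at_top_dense)
  have ev3: "eventually (\<lambda>t. 3 \<le> real (Ns t)) sequentially" using Nr unfolding filterlim_at_top by blast
  have ev4: "eventually (\<lambda>t. 1 \<le> real (ks t)) sequentially" using kr unfolding filterlim_at_top by blast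
  show ?thesis
    using ev1 ev2 ev3 ev4
  proof eventually_elim
    case (elim t)
    have et: "0 < e t" using elim(1,2) by (simp add: zero_less_divide_iff)
    have lnN: "0 < ln (real (Ns t))" using elim(3) by simp
    have kp: "0 < real (ks t)" using elim(4) by simp
    have "ln (K * ln (real (Ns t))) = ln K + ln (ln (real (Ns t)))" using K lnN by (simp add: ln_mult)
    also have "\<dots> < 2 * ln (lams t) + real (d - 1) * ln (real (ks t))" using et unfolding e_def by simp
    also have "\<dots> = ln ((lams t)^2 * real (ks t) ^ (d - 1))"
    proof -
      have l: "0 < lams t" using lpos by simp
      have "ln ((lams t)^2 * real (ks t) ^ (d - 1)) = ln ((lams t)^2) + ln (real (ks t) ^ (d - 1))"
        using l kp by (intro ln_mult_pos) auto
      also have "\<dots> = 2 * ln (lams t) + real (d - 1) * ln (real (ks t))"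
        using l kp by (simp add: ln_realpow)
      finally show ?thesis by simp
    qed
    finally have "ln (K * ln (real (Ns t))) < ln ((lams t)^2 * real (ks t) ^ (d - 1))" .
    moreover have "0 < (lams t)^2 * real (ks t) ^ (d - 1)" using lpos[rule_format, of t] kp by (intro mult_pos_pos) auto
    ultimately show ?case using K lnN by (subst (asm) ln_less_cancel_iff) auto
  qed
qed



lemma noise_ps: "prob_space (noise d n)"
  unfolding noise_def by (intro prob_space_PiM) (rule prob_space_normal_density, simp)

lemma part2:
  fixes d :: nat
  assumes d: "1 \<le> d"
    and a0: "0 \<le> \<alpha>" and gam: "\<beta> < real (d - 1) * \<alpha> / 2"
    and lpos: "\<forall>t. 0 < lams t"
    and hN: "((\<lambda>t. ln (real (Ns t)) / ln (real t)) \<longlongrightarrow> 1) sequentially"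
    and hk: "((\<lambda>t. ln (real (ks t)) / ln (real t)) \<longlongrightarrow> \<alpha>) sequentially"
    and hl: "((\<lambda>t. ln (1 / lams t) / ln (real t)) \<longlongrightarrow> \<beta>) sequentially"
    and N: "filterlim Ns at_top sequentially"
    and k: "filterlim ks at_top sequentially"
    and r: "((\<lambda>t. real (ks t) / real (Ns t)) \<longlongrightarrow> 0) sequentially"
  shows "((\<lambda>t. chc_risk d (\<lambda>_. Ns t) (\<lambda>_. ks t) (lams t)) \<longlongrightarrow> 0) sequentially"
proof -
  define C where "C = 2 * exp (2 * real d)"
  define b where "b t = C * (\<Sum>j<d. (real (Ns t) - real (ks t)) powr (-1))" for t
  have Nr: "filterlim (\<lambda>t. real (Ns t)) at_top sequentially"
    by (rule filterlim_compose[OF filterlim_real_sequentially N])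
  have e1: "eventually (\<lambda>t. 1 \<le> ks t) sequentially"
    using k unfolding filterlim_at_top by blast
  have e2: "eventually (\<lambda>t. real (ks t) \<le> 1/2 * real (Ns t)) sequentially"
  proof -
    have "eventually (\<lambda>t. real (ks t) / real (Ns t) < 1/2) sequentially"
      using r by (rule order_tendstoD) simp
    moreover have "eventually (\<lambda>t. 1 \<le> real (Ns t)) sequentially"
      using Nr unfolding filterlim_at_top by blast
    ultimately show ?thesis
      by eventually_elim (simp add: divide_less_eq)
  qed
  have e3: "eventually (\<lambda>t. (16 * (real d)^2) * ln (real (Ns t)) \<le> (lams t)^2 * real (ks t) ^ (d - 1)) sequentially"
    using d by (intro asym[OF _ gam lpos hN hk hl N k]) simp
  have good: "eventually (\<lambda>t. 0 \<le> chc_risk d (\<lambda>_. Ns t) (\<lambda>_. ks t) (lams t)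
      \<and> chc_risk d (\<lambda>_. Ns t) (\<lambda>_. ks t) (lams t) \<le> b t) sequentially"
    using e1 e2 e3
  proof eventually_elim
    case (elim t)
    let ?n = "\<lambda>_::nat. Ns t" and ?k = "\<lambda>_::nat. ks t" and ?l = "lams t"
    let ?Set = "{(I, l). I \<in> supports d ?n ?k \<and> ?l \<le> l}"
    let ?f = "\<lambda>p. 1 - success_prob d ?n ?k (snd p) (fst p)"
    have kp: "1 \<le> real (ks t)" using elim(1) by simp
    have v1: "1 \<le> real (Ns t) - real (ks t)" using elim(1,2) by simp
    have Mi: "Min ((\<lambda>j. \<Prod>z\<in>{..<d} - {j}. real (?k z)) ` {..<d}) = real (ks t) ^ (d - 1)"
    proof -
      have c: "(\<Prod>z\<in>{..<d} - {j}. real (?k z)) = real (ks t) ^ (d - 1)" if "j \<in> {..<d}" for j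
        using that by (simp add: card_Diff_singleton)
      have "(\<lambda>j. \<Prod>z\<in>{..<d} - {j}. real (?k z)) ` {..<d} = (\<lambda>j. real (ks t) ^ (d - 1)) ` {..<d}"
        by (rule image_cong[OF refl c])
      also have "\<dots> = {real (ks t) ^ (d - 1)}" using d by (simp add: image_constant_conv lessThan_empty_iff)
      finally show ?thesis by simp
    qed
    have lamc: "4 * sqrt (real d) * sqrt ((\<Sum>j<d. ln (real (?n j) - real (?k j))) /
                         Min ((\<lambda>j. \<Prod>z\<in>{..<d} - {j}. real (?k z)) ` {..<d})) \<le> ?l"
    proof -
      define v where "v = real (Ns t) - real (ks t)"
      define M' where "M' = real (ks t) ^ (d - 1)"
      have kpos: "0 < M'" using kp unfolding M'_def by simp
      have lnle: "ln v \<le> ln (real (Ns t))" using v1 kp unfolding v_def by simp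
      have sum: "(\<Sum>j<d. ln (real (?n j) - real (?k j))) = real d * ln v" unfolding v_def by simp
      have s16: "sqrt 16 = (4::real)" by (rule real_sqrt_unique) auto
      have "4 * sqrt (real d) * sqrt (real d * ln v / M') = sqrt (16 * real d * (real d * ln v / M'))"
        by (simp only: real_sqrt_mult s16)
      also have "\<dots> \<le> sqrt ((lams t)^2)"
      proof (rule real_sqrt_le_mono)
        have "16 * (real d)^2 * ln v \<le> 16 * (real d)^2 * ln (real (Ns t))"
          using lnle by (intro mult_left_mono) auto
        also have "\<dots> \<le> (lams t)^2 * M'" using elim(3) unfolding M'_def .
        finally have "16 * (real d)^2 * ln v \<le> (lams t)^2 * M'" .
        then have "16 * (real d)^2 * ln v / M' \<le> (lams t)^2"
          using kpos by (simp add: divide_le_eq)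
        then show "16 * real d * (real d * ln v / M') \<le> (lams t)^2"
          by (simp add: power2_eq_square mult.assoc)
      qed
      also have "\<dots> = lams t" using lpos[rule_format, of t] by simp
      finally show ?thesis unfolding Mi sum M'_def[symmetric] .
    qed
    have bnd: "?f p \<le> b t" if "p \<in> ?Set" for p
    proof -
      obtain I l where p: "p = (I, l)" "I \<in> supports d ?n ?k" "?l \<le> l" using \<open>p \<in> ?Set\<close> by auto
      have "1 - 2 * exp (2 * real d) * (\<Sum>j<d. (real (?n j) - real (?k j)) powr (-1)) \<le> success_prob d ?n ?k l I"
        using elim(1,2) by (intro part1[OF _ lamc p(2) p(3) d]) auto
      then show ?thesis unfolding b_def C_def p(1) by simp
    qed
    define I0 where "I0 = restrict (\<lambda>_. {..<ks t}) {..<d}"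
    have I0: "I0 \<in> supports d ?n ?k"
      unfolding I0_def supports_def using elim(2) by (auto simp: PiE_iff)
    have ne: "?Set \<noteq> {}" using I0 by auto
    have "?f (I0, ?l) \<ge> 0"
      using prob_space.prob_le_1[OF noise_ps] unfolding success_prob_def by simp
    moreover have "?f (I0, ?l) \<le> chc_risk d ?n ?k ?l"
    proof -
      have bdd: "bdd_above (?f ` ?Set)" by (rule bdd_aboveI2[where M="b t"]) (rule bnd)
      have "(I0, ?l) \<in> ?Set" using I0 by simp
      then show ?thesis unfolding chc_risk_def using bdd by (rule cSUP_upper)
    qed
    moreover have "chc_risk d ?n ?k ?l \<le> b t"
      unfolding chc_risk_def using ne bnd by (intro cSUP_least) auto
    ultimately show ?case by linarith
  qed
  have vinf: "filterlim (\<lambda>t. real (Ns t) - real (ks t)) at_top sequentially"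
    unfolding filterlim_at_top
  proof
    fix Z :: real
    have "eventually (\<lambda>t. 2 * Z \<le> real (Ns t)) sequentially"
      using Nr unfolding filterlim_at_top by blast
    then show "eventually (\<lambda>t. Z \<le> real (Ns t) - real (ks t)) sequentially"
      using e2 by eventually_elim simp
  qed
  have "((\<lambda>t. (real (Ns t) - real (ks t)) powr (-1)) \<longlongrightarrow> 0) sequentially"
    by (rule tendsto_neg_powr[OF _ vinf]) simp
  then have "((\<lambda>t. C * (real d * (real (Ns t) - real (ks t)) powr (-1))) \<longlongrightarrow> C * (real d * 0)) sequentially"
    by (intro tendsto_mult tendsto_const)
  then have b0: "(b \<longlongrightarrow> 0) sequentially"
    unfolding b_def by simp
  show ?thesis
    using good
    by (intro tendsto_sandwich[OF _ _ tendsto_const b0]) (auto elim: eventually_mono)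
qed


theorem mainTheorem2:
  fixes d :: nat
  assumes "1 \<le> d"
  shows
   "(\<exists>C0>0. \<exists>c>0. \<exists>C>0. \<exists>N::nat. \<exists>\<epsilon>>0.
      \<forall>(n::nat \<Rightarrow> nat) (k::nat \<Rightarrow> nat) (lam::real).
        (\<forall>j<d. N \<le> k j \<and> real (k j) \<le> \<epsilon> * real (n j)) \<and>
        lam \<ge> C0 * sqrt ((\<Sum>j<d. ln (real (n j) - real (k j))) /
                         Min ((\<lambda>j. \<Prod>z\<in>{..<d} - {j}. real (k z)) ` {..<d}))
        \<longrightarrow> (\<forall>I\<in>supports d n k. \<forall>lam'. lam \<le> lam' \<longrightarrow>
               success_prob d n k lam' I
                 \<ge> 1 - C * (\<Sum>j<d. (real (n j) - real (k j)) powr (- c))))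
    \<and>
    (\<forall>(\<alpha>::real) (\<beta>::real) (Ns::nat \<Rightarrow> nat) (ks::nat \<Rightarrow> nat) (lams::nat \<Rightarrow> real).
       0 \<le> \<alpha> \<and> \<alpha> \<le> 1 \<and> \<beta> < real (d - 1) * \<alpha> / 2 \<and>
       (\<forall>t. 0 < lams t) \<and>
       ((\<lambda>t. ln (real (Ns t)) / ln (real t)) \<longlongrightarrow> 1) sequentially \<and>
       ((\<lambda>t. ln (real (ks t)) / ln (real t)) \<longlongrightarrow> \<alpha>) sequentially \<and>
       ((\<lambda>t. ln (1 / lams t) / ln (real t)) \<longlongrightarrow> \<beta>) sequentially \<and>
       filterlim Ns at_top sequentially \<and>
       filterlim ks at_top sequentially \<and>
       ((\<lambda>t. real (ks t) / real (Ns t)) \<longlongrightarrow> 0) sequentially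
       \<longrightarrow> ((\<lambda>t. chc_risk d (\<lambda>_. Ns t) (\<lambda>_. ks t) (lams t)) \<longlongrightarrow> 0) sequentially)"
proof (intro conjI)
  have P1: "\<forall>(n::nat \<Rightarrow> nat) (k::nat \<Rightarrow> nat) (lam::real).
        (\<forall>j<d. 1 \<le> k j \<and> real (k j) \<le> 1/2 * real (n j)) \<and>
        lam \<ge> 4 * sqrt (real d) * sqrt ((\<Sum>j<d. ln (real (n j) - real (k j))) /
                         Min ((\<lambda>j. \<Prod>z\<in>{..<d} - {j}. real (k z)) ` {..<d}))
        \<longrightarrow> (\<forall>I\<in>supports d n k. \<forall>lam'. lam \<le> lam' \<longrightarrow>
               success_prob d n k lam' I
                 \<ge> 1 - 2 * exp (2 * real d) * (\<Sum>j<d. (real (n j) - real (k j)) powr (- 1)))"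
    using part1 assms by blast
  have pos: "0 < 4 * sqrt (real d)" "(0::real) < 1" "0 < 2 * exp (2 * real d)" "(0::real) < 1/2"
    using assms by auto
  show "\<exists>C0>0. \<exists>c>0. \<exists>C>0. \<exists>N::nat. \<exists>\<epsilon>>0.
      \<forall>(n::nat \<Rightarrow> nat) (k::nat \<Rightarrow> nat) (lam::real).
        (\<forall>j<d. N \<le> k j \<and> real (k j) \<le> \<epsilon> * real (n j)) \<and>
        lam \<ge> C0 * sqrt ((\<Sum>j<d. ln (real (n j) - real (k j))) /
                         Min ((\<lambda>j. \<Prod>z\<in>{..<d} - {j}. real (k z)) ` {..<d}))
        \<longrightarrow> (\<forall>I\<in>supports d n k. \<forall>lam'. lam \<le> lam' \<longrightarrow>
               success_prob d n k lam' I
                 \<ge> 1 - C * (\<Sum>j<d. (real (n j) - real (k j)) powr (- c)))"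
    using P1 pos by blast
next
  show "\<forall>(\<alpha>::real) (\<beta>::real) (Ns::nat \<Rightarrow> nat) (ks::nat \<Rightarrow> nat) (lams::nat \<Rightarrow> real).
       0 \<le> \<alpha> \<and> \<alpha> \<le> 1 \<and> \<beta> < real (d - 1) * \<alpha> / 2 \<and>
       (\<forall>t. 0 < lams t) \<and>
       ((\<lambda>t. ln (real (Ns t)) / ln (real t)) \<longlongrightarrow> 1) sequentially \<and>
       ((\<lambda>t. ln (real (ks t)) / ln (real t)) \<longlongrightarrow> \<alpha>) sequentially \<and>
       ((\<lambda>t. ln (1 / lams t) / ln (real t)) \<longlongrightarrow> \<beta>) sequentially \<and>
       filterlim Ns at_top sequentially \<and>
       filterlim ks at_top sequentially \<and>
       ((\<lambda>t. real (ks t) / real (Ns t)) \<longlongrightarrow> 0) sequentially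
       \<longrightarrow> ((\<lambda>t. chc_risk d (\<lambda>_. Ns t) (\<lambda>_. ks t) (lams t)) \<longlongrightarrow> 0) sequentially"
    using part2[OF assms] by blast
qed

end
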